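(* Let $\alpha\ge1$ and $N\ge2$. If $f,g$ are increasing functions on $\Omega_N$ (integrable, so that the expectations below are defined), then $\pi_{N,\alpha}(fg)\ge\pi_{N,\alpha}(f)\pi_{N,\alpha}(g)$. Moreover, the same inequality holds with $\pi_{N,\alpha}$ replaced by the conditional measure $\pi_{N,\alpha}(\cdot\mid A)$ for any Borel set $A\subset\Omega_N$ with $\pi_{N,\alpha}(A)>0$ that is stable under the operations $\vee$ and $\wedge$ (i.e. $x,x'\in A\Rightarrow x\vee x',x\wedge x'\in A$).
   Context: $\Omega_N=\{x\in\mathbb{R}^{N-1}:0\le x_1\le\dots\le x_{N-1}\le N\}$, $x_0=0$, $x_N=N$; $\pi_{N,\alpha}(dx)=\frac{\Gamma(N\alpha)}{\Gamma(\alpha)^NN^{N\alpha-1}}\prod_{i=1}^N(x_i-x_{i-1})^{\alpha-1}dx$. A function $f$ on $\Omega_N$ is increasing if $x\ge x'$ coordinatewise implies $f(x)\ge f(x')$. $(x\vee x')_i=\max(x_i,x'_i)$ and $(x\wedge x')_i=\min(x_i,x'_i)$. *)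

theory Defs
  imports "HOL-Probability.Probability"
begin

text \<open>Points of Omega_N are represented as extensional functions
  x :: nat => real on the index set {1..<N} (coordinates x_1,...,x_{N-1}),
  i.e. elements of PiE {1..<N} (\<lambda>_. UNIV); the ambient measurable space
  is the product Borel space PiM {1..<N} (\<lambda>_. lborel) = R^{N-1}.\<close>

definition ext_pt :: "nat \<Rightarrow> (nat \<Rightarrow> real) \<Rightarrow> nat \<Rightarrow> real" where
  "ext_pt N x i = (if i = 0 then 0 else if i = N then real N else x i)"

definition Omega :: "nat \<Rightarrow> (nat \<Rightarrow> real) set" where
  "Omega N = {x \<in> PiE {1..<N} (\<lambda>_. UNIV). \<forall>i<N. ext_pt N x i \<le> ext_pt N x (Suc i)}"

text \<open>t^(a) with the convention t^0 = 1 (Isabelle's powr has 0 powr 0 = 0).\<close>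
definition rpow :: "real \<Rightarrow> real \<Rightarrow> real" where
  "rpow t a = (if a = 0 then 1 else t powr a)"

definition pi_dens :: "nat \<Rightarrow> real \<Rightarrow> (nat \<Rightarrow> real) \<Rightarrow> real" where
  "pi_dens N \<alpha> x =
     Gamma (real N * \<alpha>) / (Gamma \<alpha> ^ N * real N powr (real N * \<alpha> - 1)) *
     (\<Prod>i\<in>{1..N}. rpow (ext_pt N x i - ext_pt N x (i - 1)) (\<alpha> - 1))"

definition pi_meas :: "nat \<Rightarrow> real \<Rightarrow> (nat \<Rightarrow> real) measure" where
  "pi_meas N \<alpha> = density (PiM {1..<N} (\<lambda>_. lborel))
      (\<lambda>x. ennreal (indicator (Omega N) x * pi_dens N \<alpha> x))"

definition increasing_on_Omega :: "nat \<Rightarrow> ((nat \<Rightarrow> real) \<Rightarrow> real) \<Rightarrow> bool" where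
  "increasing_on_Omega N f \<longleftrightarrow>
     (\<forall>x\<in>Omega N. \<forall>x'\<in>Omega N. (\<forall>i\<in>{1..<N}. x' i \<le> x i) \<longrightarrow> f x' \<le> f x)"

definition vee :: "nat \<Rightarrow> (nat \<Rightarrow> real) \<Rightarrow> (nat \<Rightarrow> real) \<Rightarrow> nat \<Rightarrow> real" where
  "vee N x x' = restrict (\<lambda>i. max (x i) (x' i)) {1..<N}"

definition wedge :: "nat \<Rightarrow> (nat \<Rightarrow> real) \<Rightarrow> (nat \<Rightarrow> real) \<Rightarrow> nat \<Rightarrow> real" where
  "wedge N x x' = restrict (\<lambda>i. min (x i) (x' i)) {1..<N}"

definition cond_exp :: "nat \<Rightarrow> real \<Rightarrow> (nat \<Rightarrow> real) set \<Rightarrow> ((nat \<Rightarrow> real) \<Rightarrow> real) \<Rightarrow> real" where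
  "cond_exp N \<alpha> A h = (LINT x:A|pi_meas N \<alpha>. h x) / measure (pi_meas N \<alpha>) A"

end

theory Submission
  imports Defs
begin


lemma ennreal_sum_le:
  fixes a b c d :: ennreal
  assumes "a \<le> c" "b \<le> c" "a * b \<le> c * d"
  shows "a + b \<le> c + d"
proof (cases "c = top \<or> d = top")
  case True then show ?thesis by auto
next
  case False
  then have cf: "c \<noteq> top" "d \<noteq> top" by auto
  have af: "a \<noteq> top" using assms(1) cf top_unique by auto
  have bf: "b \<noteq> top" using assms(2) cf top_unique by auto
  obtain a' b' c' d' where r: "a = ennreal a'" "b = ennreal b'" "c = ennreal c'" "d = ennreal d'"
    "a' \<ge> 0" "b' \<ge> 0" "c' \<ge> 0" "d' \<ge> 0"
    using af bf cf by (metis ennreal_cases top.not_eq_extremum)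
  have h1: "a' \<le> c'" using assms(1) r by (simp add: ennreal_le_iff)
  have h2: "b' \<le> c'" using assms(2) r by (simp add: ennreal_le_iff)
  have h3: "a' * b' \<le> c' * d'" using assms(3) r by (simp add: ennreal_mult'' [symmetric] ennreal_le_iff mult_nonneg_nonneg)
  have "a' + b' \<le> c' + d'"
  proof (cases "c' = 0")
    case True then show ?thesis using h1 h2 r by auto
  next
    case False
    then have cp: "c' > 0" using r by auto
    have "c' * (a' + b') \<le> c' * c' + a' * b'"
      using mult_mono[of 0 "c' - a'" 0 "c' - b'"] h1 h2 by (simp add: algebra_simps)
    also have "\<dots> \<le> c' * (c' + d')" using h3 by (simp add: algebra_simps)
    finally show ?thesis using cp by (simp add: mult_le_cancel_left_pos)
  qed
  then show ?thesis using r by (simp add: ennreal_plus [symmetric] del: ennreal_plus)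
qed



lemma ad_real:
  fixes g1 g2 g3 g4 :: "real \<Rightarrow> ennreal"
  assumes [measurable]: "g1 \<in> borel_measurable borel" "g2 \<in> borel_measurable borel"
    "g3 \<in> borel_measurable borel" "g4 \<in> borel_measurable borel"
  assumes H: "\<And>t s. g1 t * g2 s \<le> g3 (max t s) * g4 (min t s)"
  shows "(\<integral>\<^sup>+t. g1 t \<partial>lborel) * (\<integral>\<^sup>+t. g2 t \<partial>lborel) \<le> (\<integral>\<^sup>+t. g3 t \<partial>lborel) * (\<integral>\<^sup>+t. g4 t \<partial>lborel)"
proof -
  define I1 where "I1 = (\<integral>\<^sup>+t. g1 t \<partial>lborel)"
  define I2 where "I2 = (\<integral>\<^sup>+t. g2 t \<partial>lborel)"
  define I3 where "I3 = (\<integral>\<^sup>+t. g3 t \<partial>lborel)"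
  define I4 where "I4 = (\<integral>\<^sup>+t. g4 t \<partial>lborel)"
  have pw: "g1 t * g2 s + g1 s * g2 t \<le> g3 t * g4 s + g3 s * g4 t" for t s
  proof (cases "s \<le> t")
    case True
    have a: "g1 t * g2 s \<le> g3 t * g4 s" using H[of t s] True by (simp add: max_absorb1 min_absorb2)
    have b: "g1 s * g2 t \<le> g3 t * g4 s" using H[of s t] True by (simp add: max_absorb2 min_absorb1)
    have "(g1 t * g2 s) * (g1 s * g2 t) = (g1 t * g2 t) * (g1 s * g2 s)" by (simp add: ac_simps)
    also have "\<dots> \<le> (g3 t * g4 t) * (g3 s * g4 s)"
      using H[of t t] H[of s s] by (simp add: mult_mono)
    also have "\<dots> = (g3 t * g4 s) * (g3 s * g4 t)" by (simp add: ac_simps)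
    finally show ?thesis using ennreal_sum_le[OF a b] by simp
  next
    case False
    have a: "g1 t * g2 s \<le> g3 s * g4 t" using H[of t s] False by (simp add: max_absorb2 min_absorb1)
    have b: "g1 s * g2 t \<le> g3 s * g4 t" using H[of s t] False by (simp add: max_absorb1 min_absorb2)
    have "(g1 t * g2 s) * (g1 s * g2 t) = (g1 t * g2 t) * (g1 s * g2 s)" by (simp add: ac_simps)
    also have "\<dots> \<le> (g3 t * g4 t) * (g3 s * g4 s)"
      using H[of t t] H[of s s] by (simp add: mult_mono)
    also have "\<dots> = (g3 s * g4 t) * (g3 t * g4 s)" by (simp add: ac_simps)
    finally have "g1 t * g2 s + g1 s * g2 t \<le> g3 s * g4 t + g3 t * g4 s" by (rule ennreal_sum_le[OF a b])
    then show ?thesis by (simp add: add.commute)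
  qed
  have L: "(\<integral>\<^sup>+t. \<integral>\<^sup>+s. (g1 t * g2 s + g1 s * g2 t) \<partial>lborel \<partial>lborel) = 2 * (I1 * I2)"
  proof -
    have "(\<integral>\<^sup>+t. \<integral>\<^sup>+s. (g1 t * g2 s + g1 s * g2 t) \<partial>lborel \<partial>lborel)
        = (\<integral>\<^sup>+t. g1 t * I2 + g2 t * I1 \<partial>lborel)"
      by (intro nn_integral_cong) (simp add: nn_integral_add nn_integral_cmult nn_integral_multc I1_def I2_def mult.commute)
    also have "\<dots> = I1 * I2 + I1 * I2"
      by (simp add: nn_integral_add nn_integral_multc I1_def I2_def mult.commute)
    finally show ?thesis by (simp only: mult_2)
  qed
  have R: "(\<integral>\<^sup>+t. \<integral>\<^sup>+s. (g3 t * g4 s + g3 s * g4 t) \<partial>lborel \<partial>lborel) = 2 * (I3 * I4)"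
  proof -
    have "(\<integral>\<^sup>+t. \<integral>\<^sup>+s. (g3 t * g4 s + g3 s * g4 t) \<partial>lborel \<partial>lborel)
        = (\<integral>\<^sup>+t. g3 t * I4 + g4 t * I3 \<partial>lborel)"
      by (intro nn_integral_cong) (simp add: nn_integral_add nn_integral_cmult nn_integral_multc I3_def I4_def mult.commute)
    also have "\<dots> = I3 * I4 + I3 * I4"
      by (simp add: nn_integral_add nn_integral_multc I3_def I4_def mult.commute)
    finally show ?thesis by (simp only: mult_2)
  qed
  have "2 * (I1 * I2) \<le> 2 * (I3 * I4)"
    unfolding L[symmetric] R[symmetric]
    by (intro nn_integral_mono pw)
  then have "I1 * I2 \<le> I3 * I4"
    by (simp add: ennreal_mult_le_mult_iff)
  then show ?thesis by (simp add: I1_def I2_def I3_def I4_def)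
qed



lemma nn_integral_PiM_empty: "(\<integral>\<^sup>+x. f x \<partial>PiM {} M) = f (\<lambda>_. undefined)"
proof -
  have "(\<integral>\<^sup>+x. f x \<partial>PiM {} M) = (\<integral>\<^sup>+x. f (\<lambda>_. undefined) * indicator {\<lambda>_. undefined} x \<partial>PiM {} M)"
    by (intro nn_integral_cong) (auto simp: space_PiM_empty)
  also have "\<dots> = f (\<lambda>_. undefined)"
    by (subst nn_integral_cmult_indicator) (auto simp: sets_PiM_empty)
  finally show ?thesis .
qed

lemma sup_in_space_PiM: "x \<in> space (PiM I (\<lambda>_. lborel)) \<Longrightarrow> y \<in> space (PiM I (\<lambda>_. lborel))
   \<Longrightarrow> sup x y \<in> space (PiM I (\<lambda>_. (lborel::real measure)))"
  by (auto simp: space_PiM PiE_def extensional_def)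

lemma inf_in_space_PiM: "x \<in> space (PiM I (\<lambda>_. lborel)) \<Longrightarrow> y \<in> space (PiM I (\<lambda>_. lborel))
   \<Longrightarrow> inf x y \<in> space (PiM I (\<lambda>_. (lborel::real measure)))"
  by (auto simp: space_PiM PiE_def extensional_def)

lemma upd_in_space_PiM: "x \<in> space (PiM I (\<lambda>_. lborel)) 
   \<Longrightarrow> x(i := t) \<in> space (PiM (insert i I) (\<lambda>_. (lborel::real measure)))"
  by (auto simp: space_PiM PiE_def extensional_def)

lemma ad_pim:
  fixes I :: "nat set"
  assumes "finite I"
  shows "\<And>f1 f2 f3 f4 :: (nat \<Rightarrow> real) \<Rightarrow> ennreal.
    f1 \<in> borel_measurable (PiM I (\<lambda>_. lborel)) \<Longrightarrow> f2 \<in> borel_measurable (PiM I (\<lambda>_. lborel)) \<Longrightarrow>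
    f3 \<in> borel_measurable (PiM I (\<lambda>_. lborel)) \<Longrightarrow> f4 \<in> borel_measurable (PiM I (\<lambda>_. lborel)) \<Longrightarrow>
    (\<And>x y. x \<in> space (PiM I (\<lambda>_. lborel)) \<Longrightarrow> y \<in> space (PiM I (\<lambda>_. lborel)) \<Longrightarrow>
       f1 x * f2 y \<le> f3 (sup x y) * f4 (inf x y)) \<Longrightarrow>
    (\<integral>\<^sup>+x. f1 x \<partial>PiM I (\<lambda>_. lborel)) * (\<integral>\<^sup>+x. f2 x \<partial>PiM I (\<lambda>_. lborel))
      \<le> (\<integral>\<^sup>+x. f3 x \<partial>PiM I (\<lambda>_. lborel)) * (\<integral>\<^sup>+x. f4 x \<partial>PiM I (\<lambda>_. lborel))"
  using assms
proof (induction I rule: finite_induct)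
  case empty
  then show ?case
    using empty.prems(5)[of "\<lambda>_. undefined" "\<lambda>_. undefined"]
    by (simp add: nn_integral_PiM_empty)
next
  case (insert i I f1 f2 f3 f4)
  interpret product_sigma_finite "\<lambda>_. (lborel::real measure)" by standard
  let ?M = "PiM I (\<lambda>_. (lborel::real measure))"
  let ?Mi = "PiM (insert i I) (\<lambda>_. (lborel::real measure))"
  define F where "F = (\<lambda>f::(nat \<Rightarrow> real) \<Rightarrow> ennreal. \<lambda>x. \<integral>\<^sup>+t. f (x(i := t)) \<partial>lborel)"
  have eq: "(\<integral>\<^sup>+x. f x \<partial>?Mi) = (\<integral>\<^sup>+x. F f x \<partial>?M)" if "f \<in> borel_measurable ?Mi" for f
    unfolding F_def using that insert.hyps by (subst product_nn_integral_insert) auto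
  have meas: "F f \<in> borel_measurable ?M" if [measurable]: "f \<in> borel_measurable ?Mi" for f
  proof -
    have "(\<lambda>(x, t). f (x(i := t))) \<in> borel_measurable (?M \<Otimes>\<^sub>M lborel)"
      using insert.hyps by measurable
    then show ?thesis unfolding F_def by (rule lborel.borel_measurable_nn_integral)
  qed
  have gm: "(\<lambda>t. f (x(i := t))) \<in> borel_measurable borel" 
    if "f \<in> borel_measurable ?Mi" "x \<in> space ?M" for f x
    using measurable_comp[OF measurable_component_update that(1), OF that(2) \<open>i \<notin> I\<close>]
    by (simp add: comp_def fun_upd_def)
  have "(\<integral>\<^sup>+x. F f1 x \<partial>?M) * (\<integral>\<^sup>+x. F f2 x \<partial>?M) \<le> (\<integral>\<^sup>+x. F f3 x \<partial>?M) * (\<integral>\<^sup>+x. F f4 x \<partial>?M)"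
  proof (rule insert.IH)
    show "F f1 \<in> borel_measurable ?M" "F f2 \<in> borel_measurable ?M"
         "F f3 \<in> borel_measurable ?M" "F f4 \<in> borel_measurable ?M"
      using insert.prems by (auto intro: meas)
    fix x y assume x: "x \<in> space ?M" and y: "y \<in> space ?M"
    have sx: "sup x y \<in> space ?M" and ix: "inf x y \<in> space ?M"
      using x y by (auto intro: sup_in_space_PiM inf_in_space_PiM)
    show "F f1 x * F f2 y \<le> F f3 (sup x y) * F f4 (inf x y)"
      unfolding F_def
    proof (rule ad_real)
      show "(\<lambda>t. f1 (x(i := t))) \<in> borel_measurable borel" using gm insert.prems x by auto
      show "(\<lambda>t. f2 (y(i := t))) \<in> borel_measurable borel" using gm insert.prems y by auto
      show "(\<lambda>t. f3 ((sup x y)(i := t))) \<in> borel_measurable borel" using gm insert.prems sx by auto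
      show "(\<lambda>t. f4 ((inf x y)(i := t))) \<in> borel_measurable borel" using gm insert.prems ix by auto
      fix t s :: real
      have e1: "sup (x(i := t)) (y(i := s)) = (sup x y)(i := max t s)"
        by (auto simp: fun_eq_iff sup_max)
      have e2: "inf (x(i := t)) (y(i := s)) = (inf x y)(i := min t s)"
        by (auto simp: fun_eq_iff inf_min)
      show "f1 (x(i := t)) * f2 (y(i := s)) \<le> f3 ((sup x y)(i := max t s)) * f4 ((inf x y)(i := min t s))"
        using insert.prems(5)[OF upd_in_space_PiM[OF x, of i t] upd_in_space_PiM[OF y, of i s]] unfolding e1 e2 .
    qed
  qed
  then show ?case using insert.prems by (simp add: eq)
qed



abbreviation PM :: "nat set \<Rightarrow> (nat \<Rightarrow> real) measure" where
  "PM I \<equiv> PiM I (\<lambda>_. lborel)"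

definition wmono :: "nat set \<Rightarrow> ((nat \<Rightarrow> real) \<Rightarrow> real) \<Rightarrow> ((nat \<Rightarrow> real) \<Rightarrow> real) \<Rightarrow> bool" where
  "wmono I w h \<longleftrightarrow> (\<forall>x\<in>space (PM I). \<forall>y\<in>space (PM I). w x > 0 \<longrightarrow> w y > 0 \<longrightarrow> h x \<le> h (sup x y))"

definition lsm :: "nat set \<Rightarrow> ((nat \<Rightarrow> real) \<Rightarrow> real) \<Rightarrow> bool" where
  "lsm I w \<longleftrightarrow> (\<forall>x\<in>space (PM I). \<forall>y\<in>space (PM I). w x * w y \<le> w (sup x y) * w (inf x y))"

lemma fkg_nn:
  assumes I: "finite I"
    and w[measurable]: "w \<in> borel_measurable (PM I)" and w0: "\<And>x. w x \<ge> 0" and L: "lsm I w"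
    and f[measurable]: "f \<in> borel_measurable (PM I)" and f0: "\<And>x. f x \<ge> 0" and mf: "wmono I w f"
    and g[measurable]: "g \<in> borel_measurable (PM I)" and g0: "\<And>x. g x \<ge> 0" and mg: "wmono I w g"
  shows "(\<integral>\<^sup>+x. ennreal (f x * w x) \<partial>PM I) * (\<integral>\<^sup>+x. ennreal (g x * w x) \<partial>PM I)
     \<le> (\<integral>\<^sup>+x. ennreal (f x * g x * w x) \<partial>PM I) * (\<integral>\<^sup>+x. ennreal (w x) \<partial>PM I)"
proof (rule ad_pim[OF I])
  fix x y assume x: "x \<in> space (PM I)" and y: "y \<in> space (PM I)"
  have "f x * w x * (g y * w y) \<le> f (sup x y) * g (sup x y) * w (sup x y) * w (inf x y)"
  proof (cases "w x > 0 \<and> w y > 0")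
    case True
    have a: "f x \<le> f (sup x y)" using mf x y True unfolding wmono_def by auto
    have b: "g y \<le> g (sup x y)" using mg x y True unfolding wmono_def by (auto simp: sup_commute)
    have c: "w x * w y \<le> w (sup x y) * w (inf x y)" using L x y unfolding lsm_def by auto
    have d: "f x * g y \<le> f (sup x y) * g (sup x y)" using a b f0 g0 by (simp add: mult_mono)
    have "(f x * g y) * (w x * w y) \<le> (f (sup x y) * g (sup x y)) * (w (sup x y) * w (inf x y))"
      by (rule mult_mono[OF d c]) (use f0 g0 w0 in auto)
    then show ?thesis by (simp add: ac_simps)
  next
    case False
    then have "w x = 0 \<or> w y = 0" using w0[of x] w0[of y] by linarith
    then show ?thesis using f0 g0 w0 by auto
  qed
  then show "ennreal (f x * w x) * ennreal (g y * w y)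
     \<le> ennreal (f (sup x y) * g (sup x y) * w (sup x y)) * ennreal (w (inf x y))"
    using f0 g0 w0 by (simp add: ennreal_mult'' [symmetric] ennreal_leI)
qed auto



lemma fkg_nn_real:
  fixes w :: "(nat \<Rightarrow> real) \<Rightarrow> real" and I :: "nat set"
  defines "\<nu> \<equiv> density (PM I) (\<lambda>x. ennreal (w x))"
  assumes I: "finite I"
    and w[measurable]: "w \<in> borel_measurable (PM I)" and w0: "\<And>x. w x \<ge> 0" and L: "lsm I w"
    and fin: "emeasure \<nu> (space \<nu>) \<noteq> \<infinity>"
    and f[measurable]: "f \<in> borel_measurable (PM I)" and f0: "\<And>x. f x \<ge> 0" and mf: "wmono I w f"
    and g[measurable]: "g \<in> borel_measurable (PM I)" and g0: "\<And>x. g x \<ge> 0" and mg: "wmono I w g"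
    and fi: "integrable \<nu> f" and gi: "integrable \<nu> g" and fgi: "integrable \<nu> (\<lambda>x. f x * g x)"
  shows "(\<integral>x. f x \<partial>\<nu>) * (\<integral>x. g x \<partial>\<nu>) \<le> (\<integral>x. f x * g x \<partial>\<nu>) * measure \<nu> (space \<nu>)"
proof -
  have cv: "ennreal (\<integral>x. h x \<partial>\<nu>) = (\<integral>\<^sup>+x. ennreal (h x * w x) \<partial>PM I)"
    if [measurable]: "h \<in> borel_measurable (PM I)" and h0: "\<And>x. h x \<ge> 0" and hi: "integrable \<nu> h" for h
  proof -
    have "ennreal (\<integral>x. h x \<partial>\<nu>) = (\<integral>\<^sup>+x. ennreal (h x) \<partial>\<nu>)"
      using hi h0 by (subst nn_integral_eq_integral) auto
    also have "\<dots> = (\<integral>\<^sup>+x. ennreal (w x) * ennreal (h x) \<partial>PM I)"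
      unfolding \<nu>_def by (subst nn_integral_density) auto
    also have "\<dots> = (\<integral>\<^sup>+x. ennreal (h x * w x) \<partial>PM I)"
      using w0 h0 by (intro nn_integral_cong) (simp add: ennreal_mult'' [symmetric] mult.commute)
    finally show ?thesis .
  qed
  have cm: "ennreal (measure \<nu> (space \<nu>)) = (\<integral>\<^sup>+x. ennreal (w x) \<partial>PM I)"
  proof -
    have "ennreal (measure \<nu> (space \<nu>)) = emeasure \<nu> (space \<nu>)"
      using fin by (simp add: emeasure_eq_ennreal_measure)
    also have "\<dots> = (\<integral>\<^sup>+x. ennreal (w x) * indicator (space (PM I)) x \<partial>PM I)"
      unfolding \<nu>_def by (subst emeasure_density) auto
    also have "\<dots> = (\<integral>\<^sup>+x. ennreal (w x) \<partial>PM I)"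
      by (intro nn_integral_cong) auto
    finally show ?thesis .
  qed
  have "ennreal (\<integral>x. f x \<partial>\<nu>) * ennreal (\<integral>x. g x \<partial>\<nu>)
     \<le> ennreal (\<integral>x. f x * g x \<partial>\<nu>) * ennreal (measure \<nu> (space \<nu>))"
    unfolding cm using fkg_nn[OF I w w0 L f f0 mf g g0 mg]
    by (subst (1 2 3) cv) (use fi gi fgi f0 g0 in auto)
  moreover have "0 \<le> (\<integral>x. f x \<partial>\<nu>)" "0 \<le> (\<integral>x. g x \<partial>\<nu>)" "0 \<le> (\<integral>x. f x * g x \<partial>\<nu>)"
    using f0 g0 by (auto intro!: integral_nonneg_AE)
  ultimately show ?thesis
    by (simp add: ennreal_mult'' [symmetric] ennreal_le_iff)
qed



lemma wmono_trunc: "wmono I w f \<Longrightarrow> wmono I w (\<lambda>x. max (f x) c + d)"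
  unfolding wmono_def by (auto intro: max.mono add_right_mono simp: max.coboundedI1)

lemma fkg_real:
  fixes w :: "(nat \<Rightarrow> real) \<Rightarrow> real" and I :: "nat set"
  defines "\<nu> \<equiv> density (PM I) (\<lambda>x. ennreal (w x))"
  assumes I: "finite I"
    and w[measurable]: "w \<in> borel_measurable (PM I)" and w0: "\<And>x. w x \<ge> 0" and L: "lsm I w"
    and fin: "emeasure \<nu> (space \<nu>) \<noteq> \<infinity>"
    and f[measurable]: "f \<in> borel_measurable (PM I)" and mf: "wmono I w f"
    and g[measurable]: "g \<in> borel_measurable (PM I)" and mg: "wmono I w g"
    and fi: "integrable \<nu> f" and gi: "integrable \<nu> g" and fgi: "integrable \<nu> (\<lambda>x. f x * g x)"
  shows "(\<integral>x. f x \<partial>\<nu>) * (\<integral>x. g x \<partial>\<nu>) \<le> (\<integral>x. f x * g x \<partial>\<nu>) * measure \<nu> (space \<nu>)"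
proof -
  interpret finite_measure \<nu> using fin by (rule finite_measureI)
  define m where "m = measure \<nu> (space \<nu>)"
  define F where "F = (\<lambda>n::nat. \<lambda>x. max (f x) (- real n))"
  define G where "G = (\<lambda>n::nat. \<lambda>x. max (g x) (- real n))"
  have [measurable]: "F n \<in> borel_measurable (PM I)" "G n \<in> borel_measurable (PM I)" for n
    unfolding F_def G_def by measurable
  have fnu[measurable]: "f \<in> borel_measurable \<nu>" "g \<in> borel_measurable \<nu>" 
    "F n \<in> borel_measurable \<nu>" "G n \<in> borel_measurable \<nu>" for n
    unfolding \<nu>_def by simp_all
  have fgnu[measurable]: "(\<lambda>x. f x * g x) \<in> borel_measurable \<nu>" "(\<lambda>x. F n x * G n x) \<in> borel_measurable \<nu>" for n
    using fnu by measurable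
  have bF: "norm (F n x) \<le> norm (f x)" for n x unfolding F_def by auto
  have bG: "norm (G n x) \<le> norm (g x)" for n x unfolding G_def by auto
  have bFG: "norm (F n x * G n x) \<le> norm (f x * g x)" for n x
    using bF[of n x] bG[of n x] by (simp add: abs_mult mult_mono)
  have lF: "(\<lambda>n. F n x) \<longlonglongrightarrow> f x" for x
  proof -
    obtain n0 :: nat where "- f x \<le> real n0" using real_arch_simple by blast
    then have "\<forall>n\<ge>n0. F n x = f x" unfolding F_def by auto
    then show ?thesis by (intro tendsto_eventually) (auto simp: eventually_sequentially)
  qed
  have lG: "(\<lambda>n. G n x) \<longlonglongrightarrow> g x" for x
  proof -
    obtain n0 :: nat where "- g x \<le> real n0" using real_arch_simple by blast
    then have "\<forall>n\<ge>n0. G n x = g x" unfolding G_def by auto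
    then show ?thesis by (intro tendsto_eventually) (auto simp: eventually_sequentially)
  qed
  have lFG: "(\<lambda>n. F n x * G n x) \<longlonglongrightarrow> f x * g x" for x
    by (rule tendsto_mult[OF lF lG])
  have absf: "integrable \<nu> (\<lambda>x. norm (f x))" using fi by auto
  have absg: "integrable \<nu> (\<lambda>x. norm (g x))" using gi by auto
  have absfg: "integrable \<nu> (\<lambda>x. norm (f x * g x))" using fgi by auto
  have iF: "integrable \<nu> (F n)" for n
    by (rule integrable_dominated_convergence2[where w="\<lambda>x. norm (f x)" and f=f]) (use absf lF bF in auto)
  have iG: "integrable \<nu> (G n)" for n
    by (rule integrable_dominated_convergence2[where w="\<lambda>x. norm (g x)" and f=g]) (use absg lG bG in auto)
  have iFG: "integrable \<nu> (\<lambda>x. F n x * G n x)" for n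
    by (rule integrable_dominated_convergence2[where w="\<lambda>x. norm (f x * g x)" and f="\<lambda>x. f x * g x"])
       (use absfg lFG bFG in auto)
  have cF: "(\<lambda>n. \<integral>x. F n x \<partial>\<nu>) \<longlonglongrightarrow> (\<integral>x. f x \<partial>\<nu>)"
    by (rule integral_dominated_convergence[where w="\<lambda>x. norm (f x)"]) (use absf lF bF in auto)
  have cG: "(\<lambda>n. \<integral>x. G n x \<partial>\<nu>) \<longlonglongrightarrow> (\<integral>x. g x \<partial>\<nu>)"
    by (rule integral_dominated_convergence[where w="\<lambda>x. norm (g x)"]) (use absg lG bG in auto)
  have cFG: "(\<lambda>n. \<integral>x. F n x * G n x \<partial>\<nu>) \<longlonglongrightarrow> (\<integral>x. f x * g x \<partial>\<nu>)"
    by (rule integral_dominated_convergence[where w="\<lambda>x. norm (f x * g x)"])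
       (use absfg lFG bFG in auto)
  have step: "(\<integral>x. F n x \<partial>\<nu>) * (\<integral>x. G n x \<partial>\<nu>) \<le> (\<integral>x. F n x * G n x \<partial>\<nu>) * m" for n
  proof -
    define c where "c = real n"
    define A where "A = (\<integral>x. F n x \<partial>\<nu>)"
    define B where "B = (\<integral>x. G n x \<partial>\<nu>)"
    define C where "C = (\<integral>x. F n x * G n x \<partial>\<nu>)"
    have e1: "(\<integral>x. F n x + c \<partial>\<nu>) = A + m * c"
      unfolding A_def m_def using iF by (simp add: Bochner_Integration.integral_add)
    have e2: "(\<integral>x. G n x + c \<partial>\<nu>) = B + m * c"
      unfolding B_def m_def using iG by (simp add: Bochner_Integration.integral_add)
    have e3: "(\<integral>x. (F n x + c) * (G n x + c) \<partial>\<nu>) = C + c * A + c * B + m * c * c"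
    proof -
      have "(\<integral>x. (F n x + c) * (G n x + c) \<partial>\<nu>) = (\<integral>x. (F n x * G n x + c * F n x) + (c * G n x + c * c) \<partial>\<nu>)"
        by (intro Bochner_Integration.integral_cong) (auto simp: algebra_simps)
      also have "\<dots> = C + c * A + c * B + m * c * c"
        unfolding A_def B_def C_def m_def using iF iG iFG
        by (simp add: Bochner_Integration.integral_add)
      finally show ?thesis .
    qed
    have "(\<integral>x. F n x + c \<partial>\<nu>) * (\<integral>x. G n x + c \<partial>\<nu>) \<le> (\<integral>x. (F n x + c) * (G n x + c) \<partial>\<nu>) * m"
      unfolding m_def \<nu>_def
    proof (rule fkg_nn_real[OF I w w0 L])
      show "emeasure (density (PM I) (\<lambda>x. ennreal (w x))) (space (density (PM I) (\<lambda>x. ennreal (w x)))) \<noteq> \<infinity>"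
        using fin unfolding \<nu>_def .
      show "(\<lambda>x. F n x + c) \<in> borel_measurable (PM I)" "(\<lambda>x. G n x + c) \<in> borel_measurable (PM I)" by auto
      show "0 \<le> F n x + c" "0 \<le> G n x + c" for x unfolding F_def G_def c_def by auto
      show "wmono I w (\<lambda>x. F n x + c)" "wmono I w (\<lambda>x. G n x + c)"
        unfolding F_def G_def using mf mg by (auto intro: wmono_trunc)
      have "integrable \<nu> (\<lambda>x. F n x + c)" using iF by auto
      then show "integrable (density (PM I) (\<lambda>x. ennreal (w x))) (\<lambda>x. F n x + c)"
        unfolding \<nu>_def .
      have "integrable \<nu> (\<lambda>x. G n x + c)" using iG by auto
      then show "integrable (density (PM I) (\<lambda>x. ennreal (w x))) (\<lambda>x. G n x + c)"
        unfolding \<nu>_def .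
      have "integrable \<nu> (\<lambda>x. (F n x * G n x + c * F n x) + (c * G n x + c * c))"
        using iF iG iFG by auto
      then show "integrable (density (PM I) (\<lambda>x. ennreal (w x))) (\<lambda>x. (F n x + c) * (G n x + c))"
        unfolding \<nu>_def by (rule back_subst[of "integrable _"]) (auto simp: algebra_simps)
    qed
    then have "(A + m * c) * (B + m * c) \<le> (C + c * A + c * B + m * c * c) * m"
      by (simp only: e1 e2 e3)
    then show ?thesis unfolding A_def[symmetric] B_def[symmetric] C_def[symmetric]
      by (simp add: algebra_simps)
  qed
  show ?thesis
    using LIMSEQ_le[OF tendsto_mult[OF cF cG] tendsto_mult[OF cFG tendsto_const[of m]]] step
    unfolding m_def by auto
qed



lemma ext_pt_sup: "ext_pt N (sup x y) i = max (ext_pt N x i) (ext_pt N y i)"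
  by (auto simp: ext_pt_def sup_max)

lemma ext_pt_inf: "ext_pt N (inf x y) i = min (ext_pt N x i) (ext_pt N y i)"
  by (auto simp: ext_pt_def inf_min)

lemma space_PM: "space (PM I) = PiE I (\<lambda>_. UNIV)"
  by (simp add: space_PiM)

lemma Omega_sup: "x \<in> Omega N \<Longrightarrow> y \<in> Omega N \<Longrightarrow> sup x y \<in> Omega N"
  unfolding Omega_def using sup_in_space_PiM[of x "{1..<N}" y]
  by (auto simp: ext_pt_sup space_PM intro: max.mono)

lemma Omega_inf: "x \<in> Omega N \<Longrightarrow> y \<in> Omega N \<Longrightarrow> inf x y \<in> Omega N"
  unfolding Omega_def using inf_in_space_PiM[of x "{1..<N}" y]
  by (auto simp: ext_pt_inf space_PM intro: min.mono)

lemma Omega_space: "Omega N \<subseteq> space (PM {1..<N})"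
  unfolding Omega_def space_PM by auto

lemma vee_sup: "x \<in> space (PM {1..<N}) \<Longrightarrow> y \<in> space (PM {1..<N}) \<Longrightarrow> vee N x y = sup x y"
  unfolding vee_def space_PM by (auto simp: fun_eq_iff PiE_def extensional_def sup_max inf_min)

lemma wedge_inf: "x \<in> space (PM {1..<N}) \<Longrightarrow> y \<in> space (PM {1..<N}) \<Longrightarrow> wedge N x y = inf x y"
  unfolding wedge_def space_PM by (auto simp: fun_eq_iff PiE_def extensional_def sup_max inf_min)

lemma gap_ineq:
  fixes a0 a1 b0 b1 :: real
  assumes "a0 \<le> a1" "b0 \<le> b1"
  shows "(a1 - a0) * (b1 - b0) \<le> (max a1 b1 - max a0 b0) * (min a1 b1 - min a0 b0)"
proof -
  consider "a1 \<ge> b1" "a0 \<ge> b0" | "a1 \<ge> b1" "a0 < b0" | "a1 < b1" "a0 \<ge> b0" | "a1 < b1" "a0 < b0" by linarith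
  then show ?thesis
  proof cases
    case 1 then show ?thesis by (simp add: max_def min_def mult.commute)
  next
    case 2
    have "(a1 - b0) * (b1 - a0) - (a1 - a0) * (b1 - b0) = (a1 - b1) * (b0 - a0)" by (simp add: algebra_simps)
    moreover have "(a1 - b1) * (b0 - a0) \<ge> 0" using 2 by simp
    moreover have e: "max a1 b1 = a1" "max a0 b0 = b0" "min a1 b1 = b1" "min a0 b0 = a0" using 2 by auto
    ultimately show ?thesis unfolding e by linarith
  next
    case 3
    have "(b1 - a0) * (a1 - b0) - (a1 - a0) * (b1 - b0) = (b1 - a1) * (a0 - b0)" by (simp add: algebra_simps)
    moreover have "(b1 - a1) * (a0 - b0) \<ge> 0" using 3 by simp
    moreover have e: "max a1 b1 = b1" "max a0 b0 = a0" "min a1 b1 = a1" "min a0 b0 = b0" using 3 by auto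
    ultimately show ?thesis unfolding e by linarith
  next
    case 4 then show ?thesis by (simp add: max_def min_def mult.commute)
  qed
qed

lemma rpow_nonneg: "rpow t a \<ge> 0"
  by (simp add: rpow_def)

lemma rpow_mult_le:
  assumes "0 \<le> a" "0 \<le> p" "0 \<le> q" "0 \<le> r" "0 \<le> s" "p * q \<le> r * s"
  shows "rpow p a * rpow q a \<le> rpow r a * rpow s a"
proof (cases "a = 0")
  case True then show ?thesis by (simp add: rpow_def)
next
  case False
  have "p powr a * q powr a = (p * q) powr a" using assms by (simp add: powr_mult)
  also have "\<dots> \<le> (r * s) powr a" using assms by (intro powr_mono2) auto
  also have "\<dots> = r powr a * s powr a" using assms by (simp add: powr_mult)
  finally show ?thesis using False by (simp add: rpow_def)
qed

definition Pprod :: "nat \<Rightarrow> real \<Rightarrow> (nat \<Rightarrow> real) \<Rightarrow> real" where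
  "Pprod N \<alpha> x = (\<Prod>i\<in>{1..N}. rpow (ext_pt N x i - ext_pt N x (i - 1)) (\<alpha> - 1))"

definition Kc :: "nat \<Rightarrow> real \<Rightarrow> real" where
  "Kc N \<alpha> = Gamma (real N * \<alpha>) / (Gamma \<alpha> ^ N * real N powr (real N * \<alpha> - 1))"

lemma pi_dens_eq: "pi_dens N \<alpha> x = Kc N \<alpha> * Pprod N \<alpha> x"
  unfolding pi_dens_def Kc_def Pprod_def ..

lemma Pprod_nonneg: "Pprod N \<alpha> x \<ge> 0"
  unfolding Pprod_def by (intro prod_nonneg) (auto simp: rpow_nonneg)

lemma Kc_pos: "\<alpha> > 0 \<Longrightarrow> N \<ge> 1 \<Longrightarrow> Kc N \<alpha> > 0"
  unfolding Kc_def by (intro divide_pos_pos mult_pos_pos Gamma_real_pos zero_less_power) auto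

lemma Omega_chain: "x \<in> Omega N \<Longrightarrow> i < N \<Longrightarrow> ext_pt N x i \<le> ext_pt N x (Suc i)"
  unfolding Omega_def by auto

lemma Pprod_lsm:
  assumes "\<alpha> \<ge> 1" "x \<in> Omega N" "y \<in> Omega N"
  shows "Pprod N \<alpha> x * Pprod N \<alpha> y \<le> Pprod N \<alpha> (sup x y) * Pprod N \<alpha> (inf x y)"
proof -
  have "Pprod N \<alpha> x * Pprod N \<alpha> y = (\<Prod>i\<in>{1..N}. rpow (ext_pt N x i - ext_pt N x (i - 1)) (\<alpha> - 1) * rpow (ext_pt N y i - ext_pt N y (i - 1)) (\<alpha> - 1))"
    unfolding Pprod_def by (simp add: prod.distrib)
  also have "\<dots> \<le> (\<Prod>i\<in>{1..N}. rpow (ext_pt N (sup x y) i - ext_pt N (sup x y) (i - 1)) (\<alpha> - 1) * rpow (ext_pt N (inf x y) i - ext_pt N (inf x y) (i - 1)) (\<alpha> - 1))"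
  proof (intro prod_mono conjI)
    fix i assume i: "i \<in> {1..N}"
    then have c1: "ext_pt N x (i - 1) \<le> ext_pt N x i" "ext_pt N y (i - 1) \<le> ext_pt N y i"
      using Omega_chain[OF assms(2), of "i - 1"] Omega_chain[OF assms(3), of "i - 1"] by auto
    show "0 \<le> rpow (ext_pt N x i - ext_pt N x (i - 1)) (\<alpha> - 1) * rpow (ext_pt N y i - ext_pt N y (i - 1)) (\<alpha> - 1)"
      by (simp add: rpow_nonneg)
    show "rpow (ext_pt N x i - ext_pt N x (i - 1)) (\<alpha> - 1) * rpow (ext_pt N y i - ext_pt N y (i - 1)) (\<alpha> - 1)
       \<le> rpow (ext_pt N (sup x y) i - ext_pt N (sup x y) (i - 1)) (\<alpha> - 1) * rpow (ext_pt N (inf x y) i - ext_pt N (inf x y) (i - 1)) (\<alpha> - 1)"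
      unfolding ext_pt_sup ext_pt_inf
      using c1 assms(1) gap_ineq[OF c1]
      by (intro rpow_mult_le) (auto simp: max_def min_def)
  qed
  also have "\<dots> = Pprod N \<alpha> (sup x y) * Pprod N \<alpha> (inf x y)"
    unfolding Pprod_def by (simp add: prod.distrib)
  finally show ?thesis .
qed

lemma ext_pt_meas: "i \<le> N \<Longrightarrow> (\<lambda>x. ext_pt N x i) \<in> borel_measurable (PM {1..<N})"
  unfolding ext_pt_def
  by (cases "i = 0"; cases "i = N") (auto intro!: measurable_component_singleton)

lemma Pprod_meas: "Pprod N \<alpha> \<in> borel_measurable (PM {1..<N})"
proof -
  have "(\<lambda>x. rpow (ext_pt N x i - ext_pt N x (i - 1)) (\<alpha> - 1)) \<in> borel_measurable (PM {1..<N})"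
    if "i \<in> {1..N}" for i
  proof -
    have [measurable]: "(\<lambda>x. ext_pt N x i) \<in> borel_measurable (PM {1..<N})"
       "(\<lambda>x. ext_pt N x (i - 1)) \<in> borel_measurable (PM {1..<N})"
      using that ext_pt_meas[of i N] ext_pt_meas[of "i - 1" N] by auto
    show ?thesis unfolding rpow_def by measurable
  qed
  then show ?thesis unfolding Pprod_def[abs_def] by (intro borel_measurable_prod) auto
qed

lemma Omega_sets: "Omega N \<in> sets (PM {1..<N})"
proof -
  have "Omega N = {x \<in> space (PM {1..<N}). \<forall>i\<in>{..<N}. ext_pt N x i \<le> ext_pt N x (Suc i)}"
    unfolding Omega_def space_PM by auto
  also have "\<dots> \<in> sets (PM {1..<N})"
  proof (intro sets.sets_Collect_finite_All)
    fix i assume "i \<in> {..<N}"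
    then have [measurable]: "(\<lambda>x. ext_pt N x i) \<in> borel_measurable (PM {1..<N})"
       "(\<lambda>x. ext_pt N x (Suc i)) \<in> borel_measurable (PM {1..<N})"
      using ext_pt_meas[of i N] ext_pt_meas[of "Suc i" N] by auto
    show "{x \<in> space (PM {1..<N}). ext_pt N x i \<le> ext_pt N x (Suc i)} \<in> sets (PM {1..<N})"
      by measurable
  qed auto
  finally show ?thesis .
qed



lemma beta_nn:
  fixes a b s :: real
  assumes a: "a > 0" and b: "b > 0" and s: "s > 0"
  shows "(\<integral>\<^sup>+t. ennreal (indicator {0<..<s} t * (t powr (a - 1) * (s - t) powr (b - 1))) \<partial>lborel)
       = ennreal (s powr (a + b - 1) * Beta a b)"
proof -
  have hi: "((\<lambda>u. u powr (a - 1) * (1 - u) powr (b - 1)) has_integral Beta a b) {0<..<1}"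
    using has_integral_Beta_real[OF a b] by (simp add: has_integral_Icc_iff_Ioo)
  have B: "(\<integral>\<^sup>+u. ennreal (u powr (a - 1) * (1 - u) powr (b - 1)) * indicator {0<..<1} u \<partial>lborel) = ennreal (Beta a b)"
    by (rule nn_integral_has_integral_lebesgue'[OF _ hi]) auto
  have "(\<integral>\<^sup>+t. ennreal (indicator {0<..<s} t * (t powr (a - 1) * (s - t) powr (b - 1))) \<partial>lborel)
     = ennreal \<bar>s\<bar> * (\<integral>\<^sup>+u. ennreal (indicator {0<..<s} (0 + s * u) * ((0 + s * u) powr (a - 1) * (s - (0 + s * u)) powr (b - 1))) \<partial>lborel)"
    using s by (intro nn_integral_real_affine) auto
  also have "(\<integral>\<^sup>+u. ennreal (indicator {0<..<s} (0 + s * u) * ((0 + s * u) powr (a - 1) * (s - (0 + s * u)) powr (b - 1))) \<partial>lborel)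
     = (\<integral>\<^sup>+u. ennreal (s powr (a - 1) * s powr (b - 1)) * (ennreal (u powr (a - 1) * (1 - u) powr (b - 1)) * indicator {0<..<1} u) \<partial>lborel)"
  proof (intro nn_integral_cong)
    fix u :: real
    show "ennreal (indicator {0<..<s} (0 + s * u) * ((0 + s * u) powr (a - 1) * (s - (0 + s * u)) powr (b - 1))) =
          ennreal (s powr (a - 1) * s powr (b - 1)) * (ennreal (u powr (a - 1) * (1 - u) powr (b - 1)) * indicator {0<..<1} u)"
    proof (cases "u \<in> {0<..<1}")
      case True
      then have "s * u \<in> {0<..<s}" using s by (auto simp: mult_less_cancel_left1)
      moreover have "s - s * u = s * (1 - u)" by (simp add: algebra_simps)
      ultimately show ?thesis using True s
        by (simp add: powr_mult ennreal_mult'' [symmetric] mult_ac)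
    next
      case False
      then have "s * u \<notin> {0<..<s}" using s by (auto simp: mult_less_cancel_left1 zero_less_mult_iff)
      then show ?thesis using False by simp
    qed
  qed
  also have "\<dots> = ennreal (s powr (a - 1) * s powr (b - 1)) * ennreal (Beta a b)"
    by (subst nn_integral_cmult) (auto simp: B)
  also have "ennreal \<bar>s\<bar> * (ennreal (s powr (a - 1) * s powr (b - 1)) * ennreal (Beta a b))
      = ennreal (s powr (a + b - 1) * Beta a b)"
  proof -
    have "s powr (a + b - 1) = s powr (1 + (a - 1) + (b - 1))" by (simp add: algebra_simps)
    also have "\<dots> = s powr 1 * s powr (a - 1) * s powr (b - 1)"
      by (simp only: powr_add)
    finally have "s powr (a + b - 1) = s powr 1 * s powr (a - 1) * s powr (b - 1)" .
    moreover have "Beta a b \<ge> 0" using a b by (simp add: Beta_def Gamma_real_pos less_imp_le)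
    ultimately show ?thesis using s
      by (simp add: ennreal_mult'' [symmetric] mult_ac)
  qed
  finally show ?thesis .
qed

lemma chain_mono:
  fixes e :: "nat \<Rightarrow> real"
  assumes "\<forall>i<k. e i \<le> e (Suc i)"
  shows "j \<le> k \<Longrightarrow> e 0 \<le> e j"
proof (induction j)
  case 0 then show ?case by simp
next
  case (Suc j) then show ?case using assms by (meson Suc_le_lessD less_imp_le_nat order_trans)
qed



definition ep :: "real \<Rightarrow> nat \<Rightarrow> (nat \<Rightarrow> real) \<Rightarrow> nat \<Rightarrow> real" where
  "ep s k x i = (if i = 0 then 0 else if i = k then s else x i)"

definition OrdS :: "nat \<Rightarrow> real \<Rightarrow> (nat \<Rightarrow> real) set" where
  "OrdS k s = {x \<in> space (PM {1..<k}). \<forall>i<k. ep s k x i \<le> ep s k x (Suc i)}"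

definition Pk :: "nat \<Rightarrow> real \<Rightarrow> real \<Rightarrow> (nat \<Rightarrow> real) \<Rightarrow> real" where
  "Pk k \<alpha> s x = (\<Prod>i\<in>{1..k}. rpow (ep s k x i - ep s k x (i - 1)) (\<alpha> - 1))"

lemma ep_meas: "i \<le> k \<Longrightarrow> (\<lambda>x. ep s k x i) \<in> borel_measurable (PM {1..<k})"
  unfolding ep_def
  by (cases "i = 0"; cases "i = k") (auto intro!: measurable_component_singleton)

lemma Pk_meas: "Pk k \<alpha> s \<in> borel_measurable (PM {1..<k})"
proof -
  have "(\<lambda>x. rpow (ep s k x i - ep s k x (i - 1)) (\<alpha> - 1)) \<in> borel_measurable (PM {1..<k})"
    if "i \<in> {1..k}" for i
  proof -
    have [measurable]: "(\<lambda>x. ep s k x i) \<in> borel_measurable (PM {1..<k})"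
       "(\<lambda>x. ep s k x (i - 1)) \<in> borel_measurable (PM {1..<k})"
      using that ep_meas[of i k s] ep_meas[of "i - 1" k s] by auto
    show ?thesis unfolding rpow_def by measurable
  qed
  then show ?thesis unfolding Pk_def[abs_def] by (intro borel_measurable_prod) auto
qed

lemma OrdS_sets: "OrdS k s \<in> sets (PM {1..<k})"
proof -
  have "OrdS k s = {x \<in> space (PM {1..<k}). \<forall>i\<in>{..<k}. ep s k x i \<le> ep s k x (Suc i)}"
    unfolding OrdS_def by auto
  also have "\<dots> \<in> sets (PM {1..<k})"
  proof (intro sets.sets_Collect_finite_All)
    fix i assume "i \<in> {..<k}"
    then have [measurable]: "(\<lambda>x. ep s k x i) \<in> borel_measurable (PM {1..<k})"
       "(\<lambda>x. ep s k x (Suc i)) \<in> borel_measurable (PM {1..<k})"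
      using ep_meas[of i k s] ep_meas[of "Suc i" k s] by auto
    show "{x \<in> space (PM {1..<k}). ep s k x i \<le> ep s k x (Suc i)} \<in> sets (PM {1..<k})"
      by measurable
  qed auto
  finally show ?thesis .
qed

lemma integrand_meas: "(\<lambda>x. ennreal (indicator (OrdS k s) x * Pk k \<alpha> s x)) \<in> borel_measurable (PM {1..<k})"
  using Pk_meas[of k \<alpha> s] OrdS_sets[of k s] by measurable

lemma OrdS_nonneg: "x \<in> OrdS k t \<Longrightarrow> k \<ge> 1 \<Longrightarrow> 0 \<le> t"
  using chain_mono[of k "ep t k x" k] unfolding OrdS_def by (auto simp: ep_def)

lemma ep_upd: "k \<ge> 1 \<Longrightarrow> i \<le> k \<Longrightarrow> ep s (Suc k) (x(k := t)) i = ep t k x i"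
  by (auto simp: ep_def)

lemma OrdS_upd:
  assumes k: "k \<ge> 1" and x: "x \<in> space (PM {1..<k})"
  shows "x(k := t) \<in> OrdS (Suc k) s \<longleftrightarrow> x \<in> OrdS k t \<and> t \<le> s"
proof -
  have sp: "x(k := t) \<in> space (PM {1..<Suc k})"
    using upd_in_space_PiM[OF x, of k t] k by (simp add: atLeastLessThanSuc)
  have "(\<forall>i<Suc k. ep s (Suc k) (x(k := t)) i \<le> ep s (Suc k) (x(k := t)) (Suc i))
     \<longleftrightarrow> (\<forall>i<k. ep s (Suc k) (x(k := t)) i \<le> ep s (Suc k) (x(k := t)) (Suc i)) \<and>
          ep s (Suc k) (x(k := t)) k \<le> ep s (Suc k) (x(k := t)) (Suc k)"
    by (auto simp: less_Suc_eq)
  also have "\<dots> \<longleftrightarrow> (\<forall>i<k. ep t k x i \<le> ep t k x (Suc i)) \<and> t \<le> s"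
    using k by (auto simp: ep_upd) (auto simp: ep_def)
  finally show ?thesis using sp x unfolding OrdS_def by auto
qed

lemma Pk_upd:
  assumes k: "k \<ge> 1"
  shows "Pk (Suc k) \<alpha> s (x(k := t)) = Pk k \<alpha> t x * rpow (s - t) (\<alpha> - 1)"
proof -
  have "Pk (Suc k) \<alpha> s (x(k := t)) = (\<Prod>i\<in>{1..k}. rpow (ep s (Suc k) (x(k := t)) i - ep s (Suc k) (x(k := t)) (i - 1)) (\<alpha> - 1))
      * rpow (ep s (Suc k) (x(k := t)) (Suc k) - ep s (Suc k) (x(k := t)) k) (\<alpha> - 1)"
    unfolding Pk_def by (simp add: mult.commute)
  also have "(\<Prod>i\<in>{1..k}. rpow (ep s (Suc k) (x(k := t)) i - ep s (Suc k) (x(k := t)) (i - 1)) (\<alpha> - 1))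
       = Pk k \<alpha> t x"
    unfolding Pk_def using k by (intro prod.cong) (auto simp: ep_upd)
  also have "ep s (Suc k) (x(k := t)) (Suc k) - ep s (Suc k) (x(k := t)) k = s - t"
    using k by (auto simp: ep_def)
  finally show ?thesis .
qed



lemma Pk_nonneg: "Pk k \<alpha> s x \<ge> 0"
  unfolding Pk_def by (intro prod_nonneg) (auto simp: rpow_nonneg)

definition Dk :: "nat \<Rightarrow> real \<Rightarrow> real \<Rightarrow> ennreal" where
  "Dk k \<alpha> s = (\<integral>\<^sup>+x. ennreal (indicator (OrdS k s) x * Pk k \<alpha> s x) \<partial>PM {1..<k})"

lemma Dk_neg: "k \<ge> 1 \<Longrightarrow> t < 0 \<Longrightarrow> Dk k \<alpha> t = 0"
proof -
  assume "k \<ge> 1" "t < 0"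
  then have "OrdS k t = {}" using OrdS_nonneg by force
  then show ?thesis unfolding Dk_def by simp
qed

lemma Dk_formula:
  assumes \<alpha>: "\<alpha> \<ge> 1"
  shows "s > 0 \<Longrightarrow> Dk (Suc n) \<alpha> s = ennreal (Gamma \<alpha> ^ Suc n / Gamma (real (Suc n) * \<alpha>) * s powr (real (Suc n) * \<alpha> - 1))"
proof (induction n arbitrary: s)
  case 0
  have G: "Gamma \<alpha> \<noteq> 0" using \<alpha> by (simp add: Gamma_real_pos less_imp_neq[symmetric] )
  have "Dk (Suc 0) \<alpha> s = ennreal (indicator (OrdS 1 s) (\<lambda>_. undefined) * Pk 1 \<alpha> s (\<lambda>_. undefined))"
    unfolding Dk_def by (simp add: nn_integral_PiM_empty)
  moreover have "(\<lambda>_. undefined) \<in> OrdS 1 s" using 0 unfolding OrdS_def by (auto simp: ep_def)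
  moreover have "Pk 1 \<alpha> s (\<lambda>_. undefined) = s powr (\<alpha> - 1)"
    using 0 unfolding Pk_def by (auto simp: ep_def rpow_def)
  ultimately show ?case using G by simp
next
  case (Suc n)
  define k where "k = Suc n"
  have k: "k \<ge> 1" by (simp add: k_def)
  interpret product_sigma_finite "\<lambda>_. (lborel::real measure)" by standard
  define c where "c = Gamma \<alpha> ^ k / Gamma (real k * \<alpha>)"
  have c0: "c \<ge> 0" unfolding c_def using \<alpha> k by (intro divide_nonneg_pos zero_le_power Gamma_real_pos less_imp_le) auto
  have ins: "{1..<Suc k} = insert k {1..<k}" using k by auto
  have "Dk (Suc k) \<alpha> s = (\<integral>\<^sup>+t. \<integral>\<^sup>+x. ennreal (indicator (OrdS (Suc k) s) (x(k := t)) * Pk (Suc k) \<alpha> s (x(k := t))) \<partial>PM {1..<k} \<partial>lborel)"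
    unfolding Dk_def ins
    by (rule product_nn_integral_insert_rev) (use integrand_meas[of "Suc k" s \<alpha>] ins in auto)
  also have "\<dots> = (\<integral>\<^sup>+t. \<integral>\<^sup>+x. ennreal (indicator {..s} t * rpow (s - t) (\<alpha> - 1)) * ennreal (indicator (OrdS k t) x * Pk k \<alpha> t x) \<partial>PM {1..<k} \<partial>lborel)"
  proof (intro nn_integral_cong)
    fix t x assume x: "x \<in> space (PM {1..<k})"
    show "ennreal (indicator (OrdS (Suc k) s) (x(k := t)) * Pk (Suc k) \<alpha> s (x(k := t))) =
          ennreal (indicator {..s} t * rpow (s - t) (\<alpha> - 1)) * ennreal (indicator (OrdS k t) x * Pk k \<alpha> t x)"
      using OrdS_upd[OF k x, of t s] Pk_upd[OF k, of \<alpha> s x t]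
      by (auto simp: indicator_def ennreal_mult'' [symmetric] rpow_nonneg Pk_nonneg mult_ac)
  qed
  also have "\<dots> = (\<integral>\<^sup>+t. ennreal (indicator {..s} t * rpow (s - t) (\<alpha> - 1)) * Dk k \<alpha> t \<partial>lborel)"
    unfolding Dk_def by (intro nn_integral_cong nn_integral_cmult integrand_meas)
  also have "\<dots> = (\<integral>\<^sup>+t. ennreal (c * (indicator {0<..<s} t * (t powr (real k * \<alpha> - 1) * (s - t) powr (\<alpha> - 1)))) \<partial>lborel)"
  proof (intro nn_integral_cong_AE)
    have "AE t in lborel. t \<notin> {0, s}"
      by (intro AE_not_in countable_imp_null_set_lborel) auto
    then show "AE t in lborel. ennreal (indicator {..s} t * rpow (s - t) (\<alpha> - 1)) * Dk k \<alpha> t =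
         ennreal (c * (indicator {0<..<s} t * (t powr (real k * \<alpha> - 1) * (s - t) powr (\<alpha> - 1))))"
    proof eventually_elim
      case (elim t)
      consider "t < 0" | "0 < t" "t < s" | "s < t" using elim by force
      then show ?case
      proof cases
        case 1 then show ?thesis using Dk_neg[OF k] Suc.prems by (auto simp: indicator_def)
      next
        case 2
        have "Dk k \<alpha> t = ennreal (c * t powr (real k * \<alpha> - 1))"
          unfolding k_def c_def using Suc.IH[of t] 2 by simp
        moreover have "rpow (s - t) (\<alpha> - 1) = (s - t) powr (\<alpha> - 1)" using 2 by (simp add: rpow_def)
        ultimately show ?thesis using 2 c0
          by (simp add: indicator_def ennreal_mult'' [symmetric] mult_ac)
      next
        case 3 then show ?thesis by (auto simp: indicator_def)
      qed
    qed
  qed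
  also have "\<dots> = ennreal c * (\<integral>\<^sup>+t. ennreal (indicator {0<..<s} t * (t powr (real k * \<alpha> - 1) * (s - t) powr (\<alpha> - 1))) \<partial>lborel)"
    using c0 by (subst nn_integral_cmult[symmetric]) (auto simp: ennreal_mult)
  also have "\<dots> = ennreal c * ennreal (s powr (real k * \<alpha> + \<alpha> - 1) * Beta (real k * \<alpha>) \<alpha>)"
    using beta_nn[of "real k * \<alpha>" \<alpha> s] Suc.prems \<alpha> k by simp
  also have "\<dots> = ennreal (Gamma \<alpha> ^ Suc k / Gamma (real (Suc k) * \<alpha>) * s powr (real (Suc k) * \<alpha> - 1))"
  proof -
    have g1: "Gamma (real k * \<alpha>) > 0" "Gamma \<alpha> > 0" "Gamma (real k * \<alpha> + \<alpha>) > 0"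
      using \<alpha> k by (auto intro!: Gamma_real_pos add_pos_pos)
    have "c * (s powr (real k * \<alpha> + \<alpha> - 1) * Beta (real k * \<alpha>) \<alpha>)
        = Gamma \<alpha> ^ Suc k / Gamma (real (Suc k) * \<alpha>) * s powr (real (Suc k) * \<alpha> - 1)"
      unfolding c_def Beta_def using g1 by (simp add: field_simps distrib_right)
    then show ?thesis using c0 by (metis ennreal_mult')
  qed
  finally show ?case unfolding k_def .
qed



definition wt :: "nat \<Rightarrow> real \<Rightarrow> (nat \<Rightarrow> real) \<Rightarrow> real" where
  "wt N \<alpha> x = indicator (Omega N) x * pi_dens N \<alpha> x"

lemma wt_meas[measurable]: "wt N \<alpha> \<in> borel_measurable (PM {1..<N})"
  unfolding wt_def[abs_def] pi_dens_eq using Omega_sets[of N] Pprod_meas[of N \<alpha>] by measurable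

lemma wt_nonneg: "\<alpha> > 0 \<Longrightarrow> N \<ge> 1 \<Longrightarrow> wt N \<alpha> x \<ge> 0"
  unfolding wt_def pi_dens_eq using Kc_pos[of \<alpha> N] Pprod_nonneg[of N \<alpha> x] by auto

lemma pi_meas_eq: "pi_meas N \<alpha> = density (PM {1..<N}) (\<lambda>x. ennreal (wt N \<alpha> x))"
  unfolding pi_meas_def wt_def ..

lemma Omega_OrdS: "Omega N = OrdS N (real N)"
  unfolding Omega_def OrdS_def space_PM ext_pt_def ep_def ..

lemma Pprod_Pk: "Pprod N \<alpha> x = Pk N \<alpha> (real N) x"
  unfolding Pprod_def Pk_def ext_pt_def ep_def ..

lemma pi_meas_space: 
  assumes \<alpha>: "\<alpha> \<ge> 1" and N: "N \<ge> 1"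
  shows "emeasure (pi_meas N \<alpha>) (space (PM {1..<N})) = 1"
proof -
  obtain n where n: "N = Suc n" using N by (cases N) auto
  have K: "Kc N \<alpha> \<ge> 0" using Kc_pos[of \<alpha> N] \<alpha> N by auto
  have "emeasure (pi_meas N \<alpha>) (space (PM {1..<N})) = (\<integral>\<^sup>+x. ennreal (wt N \<alpha> x) * indicator (space (PM {1..<N})) x \<partial>PM {1..<N})"
    unfolding pi_meas_eq by (subst emeasure_density) (use wt_meas[of N \<alpha>] in auto)
  also have "\<dots> = (\<integral>\<^sup>+x. ennreal (Kc N \<alpha>) * ennreal (indicator (OrdS N (real N)) x * Pk N \<alpha> (real N) x) \<partial>PM {1..<N})"
    by (intro nn_integral_cong)
       (use K in \<open>auto simp: wt_def pi_dens_eq Omega_OrdS Pprod_Pk ennreal_mult'' [symmetric] Pk_nonneg mult_ac\<close>)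
  also have "\<dots> = ennreal (Kc N \<alpha>) * Dk N \<alpha> (real N)"
    unfolding Dk_def by (rule nn_integral_cmult) (rule integrand_meas)
  also have "Dk N \<alpha> (real N) = ennreal (Gamma \<alpha> ^ N / Gamma (real N * \<alpha>) * real N powr (real N * \<alpha> - 1))"
    unfolding n by (rule Dk_formula[OF \<alpha>]) simp
  also have "ennreal (Kc N \<alpha>) * \<dots> = 1"
  proof -
    have g: "Gamma \<alpha> > 0" "Gamma (real N * \<alpha>) > 0" using \<alpha> N by (auto intro!: Gamma_real_pos)
    have p: "real N powr (real N * \<alpha> - 1) > 0" using N by simp
    have "Kc N \<alpha> * (Gamma \<alpha> ^ N / Gamma (real N * \<alpha>) * real N powr (real N * \<alpha> - 1)) = 1"
      unfolding Kc_def using g p by (simp add: field_simps)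
    then show ?thesis using K by (metis ennreal_1 ennreal_mult')
  qed
  finally show ?thesis .
qed



lemma le_sup_coord: "\<forall>i\<in>I. (x::nat\<Rightarrow>real) i \<le> sup x y i"
  by (simp add: sup_max)

lemma fkg_pi:
  fixes N :: nat and \<alpha> :: real and f g :: "(nat \<Rightarrow> real) \<Rightarrow> real" and A :: "(nat \<Rightarrow> real) set"
  defines "\<nu> \<equiv> density (PM {1..<N}) (\<lambda>x. ennreal (wt N \<alpha> x * indicator A x))"
  assumes \<alpha>: "\<alpha> \<ge> 1" and N: "N \<ge> 2"
    and incf: "increasing_on_Omega N f" and incg: "increasing_on_Omega N g"
    and fm[measurable]: "f \<in> borel_measurable (PM {1..<N})" and gm[measurable]: "g \<in> borel_measurable (PM {1..<N})"
    and A[measurable]: "A \<in> sets (PM {1..<N})"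
    and lat: "\<And>x y. x \<in> A \<Longrightarrow> y \<in> A \<Longrightarrow> sup x y \<in> A \<and> inf x y \<in> A"
    and fi: "integrable \<nu> f" and gi: "integrable \<nu> g" and fgi: "integrable \<nu> (\<lambda>x. f x * g x)"
  shows "(\<integral>x. f x \<partial>\<nu>) * (\<integral>x. g x \<partial>\<nu>) \<le> (\<integral>x. f x * g x \<partial>\<nu>) * measure \<nu> (space \<nu>)"
    and "emeasure \<nu> (space \<nu>) = emeasure (pi_meas N \<alpha>) A"
proof -
  define w where "w = (\<lambda>x. wt N \<alpha> x * indicator A x)"
  have nu: "\<nu> = density (PM {1..<N}) (\<lambda>x. ennreal (w x))" unfolding \<nu>_def w_def ..
  have N1: "N \<ge> 1" using N by simp
  have a0: "\<alpha> > 0" using \<alpha> by simp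
  have wm[measurable]: "w \<in> borel_measurable (PM {1..<N})" unfolding w_def using wt_meas[of N \<alpha>] by measurable
  have w0: "w x \<ge> 0" for x unfolding w_def using wt_nonneg[OF a0 N1, of x] by auto
  have wpos: "x \<in> Omega N \<and> x \<in> A" if "w x > 0" for x
    using that unfolding w_def wt_def by (cases "x \<in> Omega N"; cases "x \<in> A") auto
  have L: "lsm {1..<N} w"
    unfolding lsm_def
  proof (intro ballI)
    fix x y assume x: "x \<in> space (PM {1..<N})" and y: "y \<in> space (PM {1..<N})"
    show "w x * w y \<le> w (sup x y) * w (inf x y)"
    proof (cases "x \<in> Omega N \<and> x \<in> A \<and> y \<in> Omega N \<and> y \<in> A")
      case True
      then have s: "sup x y \<in> Omega N" "sup x y \<in> A" "inf x y \<in> Omega N" "inf x y \<in> A"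
        using Omega_sup Omega_inf lat by auto
      have K: "Kc N \<alpha> > 0" using Kc_pos[OF a0 N1] .
      have "Kc N \<alpha> * Pprod N \<alpha> x * (Kc N \<alpha> * Pprod N \<alpha> y) = (Kc N \<alpha> * Kc N \<alpha>) * (Pprod N \<alpha> x * Pprod N \<alpha> y)"
        by (simp add: ac_simps)
      also have "\<dots> \<le> (Kc N \<alpha> * Kc N \<alpha>) * (Pprod N \<alpha> (sup x y) * Pprod N \<alpha> (inf x y))"
        using Pprod_lsm[OF \<alpha>, of x N y] True K by (intro mult_left_mono) auto
      also have "\<dots> = Kc N \<alpha> * Pprod N \<alpha> (sup x y) * (Kc N \<alpha> * Pprod N \<alpha> (inf x y))"
        by (simp add: ac_simps)
      finally show ?thesis using True s unfolding w_def wt_def pi_dens_eq by simp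
    next
      case False
      then have "w x = 0 \<or> w y = 0" unfolding w_def wt_def by auto
      then show ?thesis using w0 by (auto intro: mult_nonneg_nonneg)
    qed
  qed
  have mono: "wmono {1..<N} w h" if inc: "increasing_on_Omega N h" for h
    unfolding wmono_def
  proof (intro ballI impI)
    fix x y assume "x \<in> space (PM {1..<N})" "y \<in> space (PM {1..<N})" "w x > 0" "w y > 0"
    then have "x \<in> Omega N" "y \<in> Omega N" using wpos by auto
    then show "h x \<le> h (sup x y)"
      using inc Omega_sup unfolding increasing_on_Omega_def by (auto simp: sup_max)
  qed
  have em: "emeasure \<nu> (space \<nu>) = emeasure (pi_meas N \<alpha>) A"
  proof -
    have "emeasure \<nu> (space \<nu>) = (\<integral>\<^sup>+x. ennreal (w x) * indicator (space (PM {1..<N})) x \<partial>PM {1..<N})"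
      unfolding nu by (subst emeasure_density) (use wm in auto)
    also have "\<dots> = (\<integral>\<^sup>+x. ennreal (wt N \<alpha> x) * indicator A x \<partial>PM {1..<N})"
      by (intro nn_integral_cong) (auto simp: w_def indicator_def)
    also have "\<dots> = emeasure (pi_meas N \<alpha>) A"
      unfolding pi_meas_eq by (subst emeasure_density) (use wt_meas[of N \<alpha>] A in auto)
    finally show ?thesis .
  qed
  then show "emeasure \<nu> (space \<nu>) = emeasure (pi_meas N \<alpha>) A" .
  have fin: "emeasure \<nu> (space \<nu>) \<noteq> \<infinity>"
  proof -
    have "emeasure (pi_meas N \<alpha>) A \<le> emeasure (pi_meas N \<alpha>) (space (pi_meas N \<alpha>))"
      by (rule emeasure_space)
    also have "\<dots> = 1" using pi_meas_space[OF \<alpha> N1] unfolding pi_meas_eq by simp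
    finally show ?thesis using em by (auto simp: top_unique)
  qed
  show "(\<integral>x. f x \<partial>\<nu>) * (\<integral>x. g x \<partial>\<nu>) \<le> (\<integral>x. f x * g x \<partial>\<nu>) * measure \<nu> (space \<nu>)"
    using fkg_real[of "{1..<N}" w f g] fin fi gi fgi L mono[OF incf] mono[OF incg] w0 wm fm gm
    unfolding nu by auto
qed



theorem proposition2p3:
  fixes N :: nat and \<alpha> :: real and f g :: "(nat \<Rightarrow> real) \<Rightarrow> real"
  assumes "\<alpha> \<ge> 1" and "N \<ge> 2"
    and "increasing_on_Omega N f" and "increasing_on_Omega N g"
    and "integrable (pi_meas N \<alpha>) f" and "integrable (pi_meas N \<alpha>) g"
    and "integrable (pi_meas N \<alpha>) (\<lambda>x. f x * g x)"
  shows "(\<integral>x. f x * g x \<partial>pi_meas N \<alpha>) \<ge> (\<integral>x. f x \<partial>pi_meas N \<alpha>) * (\<integral>x. g x \<partial>pi_meas N \<alpha>)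
    \<and> (\<forall>A. A \<in> sets (pi_meas N \<alpha>) \<and> A \<subseteq> Omega N \<and> measure (pi_meas N \<alpha>) A > 0
           \<and> (\<forall>x\<in>A. \<forall>x'\<in>A. vee N x x' \<in> A \<and> wedge N x x' \<in> A) \<longrightarrow>
         cond_exp N \<alpha> A (\<lambda>x. f x * g x) \<ge> cond_exp N \<alpha> A f * cond_exp N \<alpha> A g)"
proof -
  note \<alpha> = assms(1) and N = assms(2) and incf = assms(3) and incg = assms(4)
    and fi = assms(5) and gi = assms(6) and fgi = assms(7)
  have N1: "N \<ge> 1" using N by simp
  have a0: "\<alpha> > 0" using \<alpha> by simp
  let ?M = "PM {1..<N}"
  have fm[measurable]: "f \<in> borel_measurable ?M"
    using borel_measurable_integrable[OF fi] unfolding pi_meas_eq by simp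
  have gm[measurable]: "g \<in> borel_measurable ?M"
    using borel_measurable_integrable[OF gi] unfolding pi_meas_eq by simp
  have wtm[measurable]: "wt N \<alpha> \<in> borel_measurable ?M" by (rule wt_meas)
  have sp: "space (pi_meas N \<alpha>) = space ?M" unfolding pi_meas_eq by simp
  have part1: "(\<integral>x. f x \<partial>pi_meas N \<alpha>) * (\<integral>x. g x \<partial>pi_meas N \<alpha>) \<le> (\<integral>x. f x * g x \<partial>pi_meas N \<alpha>)"
  proof -
    have dens: "density ?M (\<lambda>x. ennreal (wt N \<alpha> x * indicator (space ?M) x)) = pi_meas N \<alpha>"
      unfolding pi_meas_eq by (rule density_cong) (use wtm in auto)
    have lat: "\<And>x y. x \<in> space ?M \<Longrightarrow> y \<in> space ?M \<Longrightarrow> sup x y \<in> space ?M \<and> inf x y \<in> space ?M"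
      by (auto intro: sup_in_space_PiM inf_in_space_PiM)
    have "(\<integral>x. f x \<partial>pi_meas N \<alpha>) * (\<integral>x. g x \<partial>pi_meas N \<alpha>) \<le> (\<integral>x. f x * g x \<partial>pi_meas N \<alpha>) * measure (pi_meas N \<alpha>) (space (pi_meas N \<alpha>))"
      using fkg_pi(1)[OF \<alpha> N incf incg fm gm sets.top lat] fi gi fgi unfolding dens by auto
    moreover have "measure (pi_meas N \<alpha>) (space (pi_meas N \<alpha>)) = 1"
      using pi_meas_space[OF \<alpha> N1] unfolding sp measure_def by simp
    ultimately show ?thesis by simp
  qed
  have part2: "cond_exp N \<alpha> A (\<lambda>x. f x * g x) \<ge> cond_exp N \<alpha> A f * cond_exp N \<alpha> A g"
    if A1: "A \<in> sets (pi_meas N \<alpha>)" and A2: "A \<subseteq> Omega N" and A3: "measure (pi_meas N \<alpha>) A > 0"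
      and A4: "\<forall>x\<in>A. \<forall>x'\<in>A. vee N x x' \<in> A \<and> wedge N x x' \<in> A" for A
  proof -
    have A[measurable]: "A \<in> sets ?M" using A1 unfolding pi_meas_eq by simp
    have Asp: "A \<subseteq> space ?M" using A2 Omega_space by blast
    have lat: "\<And>x y. x \<in> A \<Longrightarrow> y \<in> A \<Longrightarrow> sup x y \<in> A \<and> inf x y \<in> A"
      using A4 Asp vee_sup wedge_inf by (metis subsetD)
    define \<nu> where "\<nu> = density ?M (\<lambda>x. ennreal (wt N \<alpha> x * indicator A x))"
    have w0: "\<And>x. wt N \<alpha> x \<ge> 0" using wt_nonneg[OF a0 N1] .
    have wA: "(\<lambda>x. wt N \<alpha> x * indicator A x) \<in> borel_measurable ?M" by measurable
    have int_tr: "integrable \<nu> h" if hi: "integrable (pi_meas N \<alpha>) h" for h :: "(nat \<Rightarrow> real) \<Rightarrow> real"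
    proof -
      have hm: "h \<in> borel_measurable ?M"
        using borel_measurable_integrable[OF hi] unfolding pi_meas_eq by simp
      have wAE: "AE x in ?M. 0 \<le> wt N \<alpha> x" using w0 by simp
      have "integrable ?M (\<lambda>x. wt N \<alpha> x *\<^sub>R h x)"
        using integrable_density[OF hm wtm wAE] hi unfolding pi_meas_eq by simp
      then have "integrable ?M (\<lambda>x. indicator A x *\<^sub>R (wt N \<alpha> x *\<^sub>R h x))"
        by (rule integrable_mult_indicator[OF A])
      then have "integrable ?M (\<lambda>x. (wt N \<alpha> x * indicator A x) *\<^sub>R h x)"
        by (simp add: mult_ac)
      then show ?thesis
        unfolding \<nu>_def by (subst integrable_density) (use hm wA w0 in auto)
    qed
    have int_eq: "(LINT x:A|pi_meas N \<alpha>. h x) = (\<integral>x. h x \<partial>\<nu>)" if hi: "integrable (pi_meas N \<alpha>) h" for h :: "(nat \<Rightarrow> real) \<Rightarrow> real"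
    proof -
      have hm: "h \<in> borel_measurable ?M"
        using borel_measurable_integrable[OF hi] unfolding pi_meas_eq by simp
      have ihm: "(\<lambda>x. indicator A x *\<^sub>R h x) \<in> borel_measurable ?M" using hm by measurable
      have wAE: "AE x in ?M. 0 \<le> wt N \<alpha> x" using w0 by simp
      have wAE2: "AE x in ?M. 0 \<le> wt N \<alpha> x * indicator A x" using w0 by simp
      have "(LINT x:A|pi_meas N \<alpha>. h x) = (\<integral>x. indicator A x *\<^sub>R h x \<partial>pi_meas N \<alpha>)"
        unfolding set_lebesgue_integral_def ..
      also have "\<dots> = (\<integral>x. wt N \<alpha> x *\<^sub>R (indicator A x *\<^sub>R h x) \<partial>?M)"
        unfolding pi_meas_eq by (rule integral_density[OF ihm wtm wAE])
      also have "\<dots> = (\<integral>x. (wt N \<alpha> x * indicator A x) *\<^sub>R h x \<partial>?M)"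
        by (simp add: mult_ac)
      also have "\<dots> = (\<integral>x. h x \<partial>\<nu>)"
        unfolding \<nu>_def by (rule integral_density[OF hm wA wAE2, symmetric])
      finally show ?thesis .
    qed
    have fgm: "(\<lambda>x. f x * g x) \<in> borel_measurable ?M" by measurable
    have main: "(\<integral>x. f x \<partial>\<nu>) * (\<integral>x. g x \<partial>\<nu>) \<le> (\<integral>x. f x * g x \<partial>\<nu>) * measure \<nu> (space \<nu>)"
      unfolding \<nu>_def
      by (rule fkg_pi(1)[OF \<alpha> N incf incg fm gm A lat]) (use int_tr fi gi fgi in \<open>auto simp: \<nu>_def\<close>)
    have em: "emeasure \<nu> (space \<nu>) = emeasure (pi_meas N \<alpha>) A"
      unfolding \<nu>_def
      by (rule fkg_pi(2)[OF \<alpha> N incf incg fm gm A lat]) (use int_tr fi gi fgi in \<open>auto simp: \<nu>_def\<close>)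
    have mm: "measure \<nu> (space \<nu>) = measure (pi_meas N \<alpha>) A"
      unfolding measure_def em ..
    define m where "m = measure (pi_meas N \<alpha>) A"
    have m0: "m > 0" using A3 unfolding m_def .
    have "(LINT x:A|pi_meas N \<alpha>. f x) * (LINT x:A|pi_meas N \<alpha>. g x) \<le> (LINT x:A|pi_meas N \<alpha>. f x * g x) * m"
      using main unfolding int_eq[OF fi] int_eq[OF gi] int_eq[OF fgi] mm m_def .
    then have "(LINT x:A|pi_meas N \<alpha>. f x) / m * ((LINT x:A|pi_meas N \<alpha>. g x) / m) \<le> (LINT x:A|pi_meas N \<alpha>. f x * g x) / m"
      using m0 by (simp add: field_simps power2_eq_square)
    then show ?thesis unfolding cond_exp_def m_def .
  qed
  show ?thesis using part1 part2 by auto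
qed

end
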